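(* Suppose $(a_1,a_1),\dots,(a_\ell,a_\ell)\in R$ are distinct, and that there exist $\bullet_1,\dots,\bullet_\ell\in\{\circ,\ast\}$ such that $a_1\bullet_1a_1,\dots,a_\ell\bullet_\ell a_\ell$ are pairwise distinct. Then $\pi\ge\ell(n-2q-m+1)$. Moreover, such $\bullet_i$ always exist if $n$ is odd or if $\ell=2$.
   Context: $G$ is a set of size $n$ and $G(\circ)$, $G(\ast)$ are distinct groups on $G$ with the same identity element. $\mathrm{diff}(\circ,\ast)=\{(a,b):a\circ b\ne a\ast b\}$, $\mathrm{dist}(\circ,\ast)=|\mathrm{diff}(\circ,\ast)|$, $\mathrm{dist}_a=|\{b:a\circ b\ne a\ast b\}|$; $H=\{a:\mathrm{dist}_a=0\}$, $h=|H|$; $K=\{a:\mathrm{dist}_a<n/3\}$, $k=|K|$; $m=\min\{\mathrm{dist}_a:\mathrm{dist}_a>0\}$. Standing assumption: $m\ge 3$. Let $q=\lceil n/3\rceil$ and the profit $\pi=\mathrm{dist}(\circ,\ast)-((k-h)m+(n-k)q)$. Let $R=\{(a,a)\in\mathrm{diff}(\circ,\ast):a\in K\}$, $r=|R|$. *)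

theory Defs
  imports Complex_Main "HOL-Algebra.Group"
begin

text \<open>Two binary operations f (for circ) and g (for ast) on a finite carrier G.\<close>

definition diffset :: "'a set \<Rightarrow> ('a \<Rightarrow> 'a \<Rightarrow> 'a) \<Rightarrow> ('a \<Rightarrow> 'a \<Rightarrow> 'a) \<Rightarrow> ('a \<times> 'a) set" where
  "diffset G f g = {(a, b). a \<in> G \<and> b \<in> G \<and> f a b \<noteq> g a b}"

definition distA :: "'a set \<Rightarrow> ('a \<Rightarrow> 'a \<Rightarrow> 'a) \<Rightarrow> ('a \<Rightarrow> 'a \<Rightarrow> 'a) \<Rightarrow> 'a \<Rightarrow> nat" where
  "distA G f g a = card {b \<in> G. f a b \<noteq> g a b}"

definition Hset :: "'a set \<Rightarrow> ('a \<Rightarrow> 'a \<Rightarrow> 'a) \<Rightarrow> ('a \<Rightarrow> 'a \<Rightarrow> 'a) \<Rightarrow> 'a set" where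
  "Hset G f g = {a \<in> G. distA G f g a = 0}"

definition Kset :: "'a set \<Rightarrow> ('a \<Rightarrow> 'a \<Rightarrow> 'a) \<Rightarrow> ('a \<Rightarrow> 'a \<Rightarrow> 'a) \<Rightarrow> 'a set" where
  "Kset G f g = {a \<in> G. real (distA G f g a) < real (card G) / 3}"

definition mval :: "'a set \<Rightarrow> ('a \<Rightarrow> 'a \<Rightarrow> 'a) \<Rightarrow> ('a \<Rightarrow> 'a \<Rightarrow> 'a) \<Rightarrow> nat" where
  "mval G f g = Min {distA G f g a | a. a \<in> G \<and> distA G f g a > 0}"

definition qval :: "nat \<Rightarrow> int" where
  "qval n = \<lceil>real n / 3\<rceil>"

definition profit :: "'a set \<Rightarrow> ('a \<Rightarrow> 'a \<Rightarrow> 'a) \<Rightarrow> ('a \<Rightarrow> 'a \<Rightarrow> 'a) \<Rightarrow> int" where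
  "profit G f g = int (card (diffset G f g))
     - ((int (card (Kset G f g)) - int (card (Hset G f g))) * int (mval G f g)
        + (int (card G) - int (card (Kset G f g))) * qval (card G))"

definition Rset :: "'a set \<Rightarrow> ('a \<Rightarrow> 'a \<Rightarrow> 'a) \<Rightarrow> ('a \<Rightarrow> 'a \<Rightarrow> 'a) \<Rightarrow> ('a \<times> 'a) set" where
  "Rset G f g = {(a, a) | a. a \<in> Kset G f g \<and> (a, a) \<in> diffset G f g}"

end

theory Submission
  imports Defs "HOL-Algebra.Multiplicative_Group"
begin

lemma (in group) sq_inj_aux:
  assumes "odd (order G)" "x \<in> carrier G"
  shows "x = (x \<otimes> x) [^] (Suc (order G) div 2)"
proof -
  have xx: "x \<otimes> x = x [^] (2::nat)" using assms by (simp add: numeral_2_eq_2)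
  have "2 * (Suc (order G) div 2) = Suc (order G)" using assms(1) by presburger
  have "(x \<otimes> x) [^] (Suc (order G) div 2) = x [^] (2 * (Suc (order G) div 2))"
    unfolding xx by (rule nat_pow_pow[OF assms(2)])
  also have "\<dots> = x [^] Suc (order G)" using \<open>2 * _ = _\<close> by simp
  also have "\<dots> = x [^] order G \<otimes> x" by (rule nat_pow_Suc)
  also have "\<dots> = x" using assms pow_order_eq_1 by simp
  finally show ?thesis by simp
qed

lemma (in group) sq_inj:
  assumes "odd (order G)" "x \<in> carrier G" "y \<in> carrier G" "x \<otimes> x = y \<otimes> y"
  shows "x = y"
  using sq_inj_aux[OF assms(1,2)] sq_inj_aux[OF assms(1,3)] assms(4) by simp

lemma grp_basic:
  assumes "group \<lparr>carrier = G, mult = f, one = e\<rparr>"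
  shows "\<And>x y. x\<in>G \<Longrightarrow> y\<in>G \<Longrightarrow> f x y \<in> G"
    and "\<And>x y z. x\<in>G \<Longrightarrow> y\<in>G \<Longrightarrow> z\<in>G \<Longrightarrow> f (f x y) z = f x (f y z)"
    and "\<And>x y z. x\<in>G \<Longrightarrow> y\<in>G \<Longrightarrow> z\<in>G \<Longrightarrow> f x y = f x z \<Longrightarrow> y = z"
    and "\<And>x y z. x\<in>G \<Longrightarrow> y\<in>G \<Longrightarrow> z\<in>G \<Longrightarrow> f x z = f y z \<Longrightarrow> x = y"
    and "e \<in> G"
proof -
  interpret F: group "\<lparr>carrier = G, mult = f, one = e\<rparr>" by fact
  show "\<And>x y. x\<in>G \<Longrightarrow> y\<in>G \<Longrightarrow> f x y \<in> G" using F.m_closed by force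
  show "\<And>x y z. x\<in>G \<Longrightarrow> y\<in>G \<Longrightarrow> z\<in>G \<Longrightarrow> f (f x y) z = f x (f y z)"
    using F.m_assoc by force
  show "\<And>x y z. x\<in>G \<Longrightarrow> y\<in>G \<Longrightarrow> z\<in>G \<Longrightarrow> f x y = f x z \<Longrightarrow> y = z"
    using F.Units_l_cancel F.Units_eq by force
  show "\<And>x y z. x\<in>G \<Longrightarrow> y\<in>G \<Longrightarrow> z\<in>G \<Longrightarrow> f x z = f y z \<Longrightarrow> x = y"
    using F.right_cancel by force
  show "e \<in> G" using F.one_closed by simp
qed

lemma sq_odd_inj:
  assumes "group \<lparr>carrier = G, mult = f, one = e\<rparr>" "odd (card G)" "x \<in> G" "y \<in> G"
    "f x x = f y y"
  shows "x = y"
proof -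
  interpret F: group "\<lparr>carrier = G, mult = f, one = e\<rparr>" by fact
  show ?thesis using F.sq_inj[of x y] assms by (simp add: order_def)
qed

lemma sq_dist:
  assumes fin: "finite G"
    and grp_f: "group \<lparr>carrier = G, mult = f, one = e\<rparr>"
    and grp_g: "group \<lparr>carrier = G, mult = g, one = e\<rparr>"
    and aG: "a \<in> G" and ne: "f a a \<noteq> g a a" and x: "x = f a a \<or> x = g a a"
  shows "card G \<le> distA G f g x + 2 * distA G f g a"
proof -
  note F = grp_basic[OF grp_f] and Gg = grp_basic[OF grp_g]
  let ?D = "{b\<in>G. f a b \<noteq> g a b}"
  define S where "S = {b\<in>G. f a b = g a b \<and> f a (f a b) = g a (f a b)}"
  have gcl: "\<And>b. b\<in>G \<Longrightarrow> g a b \<in> G" using Gg(1) aG by blast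
  have fcl: "\<And>b. b\<in>G \<Longrightarrow> f a b \<in> G" using F(1) aG by blast
  have sub: "G - S \<subseteq> ?D \<union> {b\<in>G. f a b \<in> ?D}" 
  proof
    fix b assume b: "b \<in> G - S"
    hence "b \<in> G" by simp
    thus "b \<in> ?D \<union> {b\<in>G. f a b \<in> ?D}" using b fcl[of b] unfolding S_def by auto
  qed
  have "card {b\<in>G. f a b \<in> ?D} \<le> card ?D"
  proof (rule card_inj_on_le)
    show "inj_on (f a) {b\<in>G. f a b \<in> ?D}" using F(3) aG by (auto simp: inj_on_def)
  qed (use fin gcl in auto)
  hence c1: "card (G - S) \<le> 2 * card ?D"
    using card_mono[OF _ sub] card_Un_le[of ?D "{b\<in>G. f a b \<in> ?D}"] fin by simp
  have SG: "S \<subseteq> G" by (auto simp: S_def)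
  have c2: "card G = card S + card (G - S)"
    using card_Diff_subset[OF finite_subset[OF SG fin] SG] card_mono[OF fin SG] by simp
  have xG: "x \<in> G" using x F(1) Gg(1) aG by auto
  have "S \<subseteq> {b\<in>G. f x b \<noteq> g x b}"
  proof
    fix b assume b: "b \<in> S"
    hence bG: "b \<in> G" and e1: "f a b = g a b" and e2: "f a (f a b) = g a (f a b)"
      by (auto simp: S_def)
    have fab: "f a b \<in> G" using F(1) aG bG by auto
    have key: "f (f a a) b = g (g a a) b"
      using F(2)[OF aG aG bG] Gg(2)[OF aG aG bG] e1 e2 by simp
    show "b \<in> {b\<in>G. f x b \<noteq> g x b}"
    proof (cases "x = f a a")
      case True
      show ?thesis
      proof (rule ccontr)
        assume "b \<notin> {b\<in>G. f x b \<noteq> g x b}"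
        hence "g (f a a) b = g (g a a) b" using True bG key by auto
        hence "f a a = g a a" using Gg(4)[of "f a a" "g a a" b] fcl[OF aG] gcl[OF aG] bG by simp
        thus False using ne by simp
      qed
    next
      case False
      hence xg: "x = g a a" using x by simp
      show ?thesis
      proof (rule ccontr)
        assume "b \<notin> {b\<in>G. f x b \<noteq> g x b}"
        hence "f (g a a) b = f (f a a) b" using xg bG key by auto
        hence "g a a = f a a" using F(4)[of "g a a" "f a a" b] fcl[OF aG] gcl[OF aG] bG by simp
        thus False using ne by simp
      qed
    qed
  qed
  hence "card S \<le> distA G f g x" unfolding distA_def by (rule card_mono[rotated]) (use fin in auto)
  thus ?thesis using c1 c2 unfolding distA_def by linarith
qed


theorem lemma9p1:
  fixes G :: "'a set" and f g :: "'a \<Rightarrow> 'a \<Rightarrow> 'a" and e :: 'a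
    and l :: nat and a :: "nat \<Rightarrow> 'a"
  assumes fin: "finite G"
    and grp_f: "group \<lparr>carrier = G, mult = f, one = e\<rparr>"
    and grp_g: "group \<lparr>carrier = G, mult = g, one = e\<rparr>"
    and distinct_ops: "\<exists>x\<in>G. \<exists>y\<in>G. f x y \<noteq> g x y"
    and m_ge: "mval G f g \<ge> 3"
    and inR: "\<forall>i<l. (a i, a i) \<in> Rset G f g"
    and distinct_a: "inj_on a {..<l}"
  shows "((\<exists>c :: nat \<Rightarrow> bool.
             inj_on (\<lambda>i. (if c i then f else g) (a i) (a i)) {..<l})
          \<longrightarrow> profit G f g \<ge> int l * (int (card G) - 2 * qval (card G) - int (mval G f g) + 1))
       \<and> ((odd (card G) \<or> l = 2) \<longrightarrow>
          (\<exists>c :: nat \<Rightarrow> bool.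
             inj_on (\<lambda>i. (if c i then f else g) (a i) (a i)) {..<l}))"
proof
  note F = grp_basic[OF grp_f] and Gg = grp_basic[OF grp_g]
  have aK: "\<And>i. i < l \<Longrightarrow> a i \<in> Kset G f g \<and> a i \<in> G \<and> f (a i) (a i) \<noteq> g (a i) (a i)"
    using inR by (auto simp: Rset_def diffset_def Kset_def)
  show "(\<exists>c :: nat \<Rightarrow> bool.
             inj_on (\<lambda>i. (if c i then f else g) (a i) (a i)) {..<l})
          \<longrightarrow> profit G f g \<ge> int l * (int (card G) - 2 * qval (card G) - int (mval G f g) + 1)"
  proof
    assume "\<exists>c :: nat \<Rightarrow> bool. inj_on (\<lambda>i. (if c i then f else g) (a i) (a i)) {..<l}"
    then obtain sel :: "nat \<Rightarrow> bool" where
      injc: "inj_on (\<lambda>i. (if sel i then f else g) (a i) (a i)) {..<l}" by blast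
    define cc where "cc = (\<lambda>i. (if sel i then f else g) (a i) (a i))"
    define dist where "dist = distA G f g"
    define K where "K = Kset G f g"
    define H where "H = Hset G f g"
    define m where "m = mval G f g"
    define q where "q = qval (card G)"
    define n where "n = card G"
    have n_pos: "n > 0" using F(5) fin by (auto simp: n_def card_gt_0_iff)
    have KG: "K \<subseteq> G" by (auto simp: K_def Kset_def)
    have HK: "H \<subseteq> K" using n_pos by (auto simp: H_def Hset_def K_def Kset_def n_def)
    have inK: "\<And>x. x \<in> K \<Longrightarrow> int (dist x) + 1 \<le> q"
    proof -
      fix x assume "x \<in> K"
      hence "real (dist x) < real n / 3" by (simp add: K_def Kset_def dist_def n_def)
      hence "int (dist x) < q" unfolding q_def qval_def n_def
        by (simp add: less_ceiling_iff)
      thus "int (dist x) + 1 \<le> q" by simp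
    qed
    have notK: "\<And>x. x \<in> G \<Longrightarrow> x \<notin> K \<Longrightarrow> q \<le> int (dist x)"
    proof -
      fix x assume "x \<in> G" "x \<notin> K"
      hence "real n / 3 \<le> real (dist x)" by (simp add: K_def Kset_def dist_def n_def)
      thus "q \<le> int (dist x)" unfolding q_def qval_def n_def
        by (simp add: ceiling_le_iff)
    qed
    have inKH: "\<And>x. x \<in> K \<Longrightarrow> x \<notin> H \<Longrightarrow> m \<le> dist x"
    proof -
      fix x assume x: "x \<in> K" "x \<notin> H"
      hence xG: "x \<in> G" and dp: "dist x > 0" using KG
        by (auto simp: H_def Hset_def dist_def)
      have fs: "finite {distA G f g a | a. a \<in> G \<and> distA G f g a > 0}"
        by (rule finite_subset[of _ "distA G f g ` G"]) (use fin in auto)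
      show "m \<le> dist x" unfolding m_def mval_def
        by (rule Min_le[OF fs]) (use xG dp dist_def in auto)
    qed
    have Hd: "\<And>x. x \<in> H \<Longrightarrow> dist x = 0" by (simp add: H_def Hset_def dist_def)
    define w where "w = (\<lambda>x. if x \<in> H then 0 else if x \<in> K then int m else q)"
    define t where "t = (\<lambda>x. int (dist x) - w x)"
    have finK: "finite K" using KG fin finite_subset by blast
    have finH: "finite H" using HK finK finite_subset by blast
    have sumw: "(\<Sum>x\<in>G. w x) = (int (card K) - int (card H)) * int m + (int n - int (card K)) * q"
    proof -
      have "(\<Sum>x\<in>G. w x) = (\<Sum>x\<in>G - K. w x) + (\<Sum>x\<in>K. w x)"
        by (rule sum.subset_diff[OF KG fin])
      also have "(\<Sum>x\<in>K. w x) = (\<Sum>x\<in>K - H. w x) + (\<Sum>x\<in>H. w x)"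
        by (rule sum.subset_diff[OF HK finK])
      also have "(\<Sum>x\<in>H. w x) = 0" by (simp add: w_def)
      also have "(\<Sum>x\<in>K - H. w x) = (\<Sum>x\<in>K - H. int m)" by (rule sum.cong) (auto simp: w_def)
      also have "(\<Sum>x\<in>G - K. w x) = (\<Sum>x\<in>G - K. q)" using HK by (intro sum.cong) (auto simp: w_def)
      finally have "(\<Sum>x\<in>G. w x) = int (card (G - K)) * q + int (card (K - H)) * int m"
        by simp
      moreover have "card (G - K) = n - card K" using card_Diff_subset[OF finK KG] n_def by simp
      moreover have "card (K - H) = card K - card H" using card_Diff_subset[OF finH HK] by simp
      moreover have "card K \<le> n" using card_mono[OF fin KG] n_def by simp
      moreover have "card H \<le> card K" using card_mono[OF finK HK] by simp
      ultimately show ?thesis by (simp add: of_nat_diff algebra_simps)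
    qed
    have cardD: "int (card (diffset G f g)) = (\<Sum>x\<in>G. int (dist x))"
    proof -
      have "diffset G f g = Sigma G (\<lambda>x. {b\<in>G. f x b \<noteq> g x b})"
        by (auto simp: diffset_def)
      hence "card (diffset G f g) = (\<Sum>x\<in>G. card {b\<in>G. f x b \<noteq> g x b})"
        using fin by simp
      thus ?thesis by (simp add: dist_def distA_def)
    qed
    have profit_eq: "profit G f g = (\<Sum>x\<in>G. t x)"
      unfolding t_def sum_subtractf profit_def cardD sumw
      by (simp add: K_def H_def m_def q_def n_def)
    have t_nonneg: "\<And>x. x \<in> G \<Longrightarrow> 0 \<le> t x"
    proof -
      fix x assume xG: "x \<in> G"
      show "0 \<le> t x"
      proof (cases "x \<in> H")
        case True thus ?thesis by (simp add: t_def w_def)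
      next
        case nH: False
        show ?thesis
        proof (cases "x \<in> K")
          case True thus ?thesis using nH inKH[of x] by (simp add: t_def w_def)
        next
          case False thus ?thesis using nH notK[OF xG] by (simp add: t_def w_def)
        qed
      qed
    qed
    have ccG: "\<And>i. i < l \<Longrightarrow> cc i \<in> G" using aK F(1) Gg(1) by (auto simp: cc_def)
    have cc_big: "\<And>i. i < l \<Longrightarrow> n \<le> dist (cc i) + 2 * dist (a i)"
      unfolding n_def dist_def
      using sq_dist[OF fin grp_f grp_g] aK by (auto simp: cc_def)
    have aKd: "\<And>i. i < l \<Longrightarrow> 3 * dist (a i) < n"
    proof -
      fix i assume "i < l"
      hence "real (dist (a i)) < real n / 3" using aK by (simp add: Kset_def dist_def n_def)
      thus "3 * dist (a i) < n" by linarith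
    qed
    have ccK: "\<And>i. i < l \<Longrightarrow> cc i \<notin> K"
    proof
      fix i assume i: "i < l" and "cc i \<in> K"
      hence "real (dist (cc i)) < real n / 3" by (simp add: K_def Kset_def dist_def n_def)
      hence "3 * dist (cc i) < n" by linarith
      thus False using cc_big[OF i] aKd[OF i] by linarith
    qed
    have aH: "\<And>i. i < l \<Longrightarrow> a i \<notin> H"
    proof
      fix i assume i: "i < l" and "a i \<in> H"
      hence "dist (a i) = 0" using Hd by blast
      moreover have "a i \<in> {b\<in>G. f (a i) b \<noteq> g (a i) b}" using aK[OF i] by simp
      hence "dist (a i) > 0" unfolding dist_def distA_def using fin
        by (metis (no_types, lifting) card_gt_0_iff empty_iff finite_subset mem_Collect_eq subsetI)
      ultimately show False by simp
    qed
    have pair: "\<And>i. i < l \<Longrightarrow> int n - 2 * q - int m + 1 \<le> t (a i) + t (cc i)"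
    proof -
      fix i assume i: "i < l"
      have ta: "t (a i) = int (dist (a i)) - int m" using aH[OF i] aK[OF i]
        by (simp add: t_def w_def K_def)
      have tc: "t (cc i) = int (dist (cc i)) - q" using ccK[OF i] HK
        by (auto simp: t_def w_def)
      have "a i \<in> K" using aK[OF i] by (simp add: K_def)
      hence "int (dist (a i)) + 1 \<le> q" by (rule inK)
      thus "int n - 2 * q - int m + 1 \<le> t (a i) + t (cc i)"
        using cc_big[OF i] ta tc by linarith
    qed
    let ?A = "a ` {..<l}" and ?C = "cc ` {..<l}"
    have injcc: "inj_on cc {..<l}" using injc by (simp add: cc_def)
    have disj: "?A \<inter> ?C = {}"
    proof (rule ccontr)
      assume "?A \<inter> ?C \<noteq> {}"
      then obtain i j where i: "i < l" and j: "j < l" and eq: "a i = cc j" by auto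
      have "a i \<in> K" using aK[OF i] by (simp add: K_def)
      thus False using ccK[OF j] eq by simp
    qed
    have subG: "?A \<union> ?C \<subseteq> G" using aK ccG by auto
    have "int l * (int n - 2 * q - int m + 1) = (\<Sum>i<l. int n - 2 * q - int m + 1)" by simp
    also have "\<dots> \<le> (\<Sum>i<l. t (a i) + t (cc i))" by (rule sum_mono) (use pair in auto)
    also have "\<dots> = (\<Sum>x\<in>?A. t x) + (\<Sum>x\<in>?C. t x)"
      by (simp add: sum.distrib sum.reindex[OF distinct_a] sum.reindex[OF injcc])
    also have "\<dots> = (\<Sum>x\<in>?A \<union> ?C. t x)" using disj by (simp add: sum.union_disjoint)
    also have "\<dots> \<le> (\<Sum>x\<in>G. t x)"
      by (rule sum_mono2[OF fin subG]) (use t_nonneg in auto)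
    finally show "profit G f g \<ge> int l * (int (card G) - 2 * qval (card G) - int (mval G f g) + 1)"
      using profit_eq by (simp add: n_def q_def m_def)
  qed
  show "(odd (card G) \<or> l = 2) \<longrightarrow>
          (\<exists>c :: nat \<Rightarrow> bool.
             inj_on (\<lambda>i. (if c i then f else g) (a i) (a i)) {..<l})"
  proof
    assume "odd (card G) \<or> l = 2"
    thus "\<exists>c :: nat \<Rightarrow> bool. inj_on (\<lambda>i. (if c i then f else g) (a i) (a i)) {..<l}"
    proof
      assume odd: "odd (card G)"
      have "inj_on (\<lambda>i. (if (\<lambda>_. True) i then f else g) (a i) (a i)) {..<l}"
      proof (rule inj_onI)
        fix i j assume i: "i \<in> {..<l}" and j: "j \<in> {..<l}"
          and eq: "(if (\<lambda>_. True) i then f else g) (a i) (a i) = (if (\<lambda>_. True) j then f else g) (a j) (a j)"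
        hence "a i = a j" using sq_odd_inj[OF grp_f odd] aK by simp
        thus "i = j" using distinct_a i j by (simp add: inj_on_def)
      qed
      thus ?thesis by (rule exI[where x="\<lambda>_. True"])
    next
      assume l2: "l = 2"
      define sel where "sel = (\<lambda>i::nat. i = 0 \<or> f (a 0) (a 0) \<noteq> f (a 1) (a 1))"
      have "inj_on (\<lambda>i. (if sel i then f else g) (a i) (a i)) {..<l}"
      proof -
        have "{..<l} = {0, 1::nat}" using l2 by auto
        moreover have "f (a 0) (a 0) \<noteq> (if sel 1 then f else g) (a 1) (a 1)"
          using aK[of 1] l2 by (auto simp: sel_def)
        ultimately show ?thesis by (simp add: sel_def)
      qed
      thus ?thesis by blast
    qed
  qed
qed

end
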